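(* Let $G$ be a graph, let $S,T \subseteq V(G)$ be disjoint, and let $P^-$ and $P^+$ be the closest and farthest minimum left-restricted $(S,T)$-separators, i.e. minimum left-restricted $(S,T)$-separators such that every minimum left-restricted $(S,T)$-separator $P$ satisfies $R_G(S,P^-) \subseteq R_G(S,P) \subseteq R_G(S,P^+)$. Then for any vertex $v \in V(G)$: (1) $\lambda^{\mathrm{L}}_G(S \cup \{v\}, T) > \lambda^{\mathrm{L}}_G(S,T)$ if and only if $v \in R_G(T,P^+) \cup P^+$; (2) $\lambda^{\mathrm{L}}_G(S, T \cup \{v\}) > \lambda^{\mathrm{L}}_G(S,T)$ if and only if $v \in R_G(S,P^-)$.
   Context: For $S,T \subseteq V(G)$, a set $P \subseteq V(G)$ is an (unrestricted) $(S,T)$-separator if every path from a vertex of $S$ to a vertex of $T$ contains a vertex of $P$; it is a left-restricted $(S,T)$-separator if additionally $P \cap S = \emptyset$. $\lambda^{\mathrm{L}}_G(S,T)$ is the minimum size of a left-restricted $(S,T)$-separator, or $+\infty$ if none exists (which happens exactly when $S \cap T \neq \emptyset$). For vertex sets $X,P$, $R_G(X,P)$ denotes the set of vertices reachable in $G-P$ from at least one vertex of $X \setminus P$. (Closest and farthest minimum left-restricted separators exist when $S \cap T = \emptyset$.) *)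

theory Defs
  imports Main "HOL-Library.Extended_Nat"
begin

definition graph :: "'a set \<Rightarrow> ('a \<Rightarrow> 'a \<Rightarrow> bool) \<Rightarrow> bool" where
  "graph V E \<longleftrightarrow> finite V \<and> (\<forall>u v. E u v \<longrightarrow> u \<in> V \<and> v \<in> V \<and> E v u \<and> u \<noteq> v)"

definition gpath :: "'a set \<Rightarrow> ('a \<Rightarrow> 'a \<Rightarrow> bool) \<Rightarrow> 'a list \<Rightarrow> bool" where
  "gpath V E p \<longleftrightarrow> p \<noteq> [] \<and> set p \<subseteq> V \<and> distinct p \<and> successively E p"

definition separator :: "'a set \<Rightarrow> ('a \<Rightarrow> 'a \<Rightarrow> bool) \<Rightarrow> 'a set \<Rightarrow> 'a set \<Rightarrow> 'a set \<Rightarrow> bool" where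
  "separator V E S T P \<longleftrightarrow> P \<subseteq> V \<and>
     (\<forall>p. gpath V E p \<and> hd p \<in> S \<and> last p \<in> T \<longrightarrow> set p \<inter> P \<noteq> {})"

definition lsep :: "'a set \<Rightarrow> ('a \<Rightarrow> 'a \<Rightarrow> bool) \<Rightarrow> 'a set \<Rightarrow> 'a set \<Rightarrow> 'a set \<Rightarrow> bool" where
  "lsep V E S T P \<longleftrightarrow> separator V E S T P \<and> P \<inter> S = {}"

text \<open>\<lambda>^L_G(S,T): minimum size of a left-restricted separator, \<infinity> if none (Inf {} = \<infinity>).\<close>
definition lambdaL :: "'a set \<Rightarrow> ('a \<Rightarrow> 'a \<Rightarrow> bool) \<Rightarrow> 'a set \<Rightarrow> 'a set \<Rightarrow> enat" where
  "lambdaL V E S T = (INF P \<in> {P. lsep V E S T P}. enat (card P))"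

definition min_lsep :: "'a set \<Rightarrow> ('a \<Rightarrow> 'a \<Rightarrow> bool) \<Rightarrow> 'a set \<Rightarrow> 'a set \<Rightarrow> 'a set \<Rightarrow> bool" where
  "min_lsep V E S T P \<longleftrightarrow> lsep V E S T P \<and> enat (card P) = lambdaL V E S T"

definition reach :: "'a set \<Rightarrow> ('a \<Rightarrow> 'a \<Rightarrow> bool) \<Rightarrow> 'a set \<Rightarrow> 'a set \<Rightarrow> 'a set" where
  "reach V E X P = {y. \<exists>p. gpath (V - P) E p \<and> hd p \<in> X - P \<and> last p = y}"

end

theory Submission
  imports Defs
begin

definition nbr :: "'a set \<Rightarrow> ('a \<Rightarrow> 'a \<Rightarrow> bool) \<Rightarrow> 'a set \<Rightarrow> 'a set" where
  "nbr V E X = {y \<in> V. y \<notin> X \<and> (\<exists>x\<in>X. E x y)}"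

lemma gpath_mono: "gpath V' E p \<Longrightarrow> V' \<subseteq> V \<Longrightarrow> gpath V E p"
  unfolding gpath_def by auto

lemma crossing:
  "successively E p \<Longrightarrow> p \<noteq> [] \<Longrightarrow> hd p \<notin> X \<Longrightarrow> last p \<in> X \<Longrightarrow>
   \<exists>x y. x \<notin> X \<and> y \<in> X \<and> E x y \<and> x \<in> set p \<and> y \<in> set p"
proof (induction p)
  case Nil then show ?case by simp
next
  case (Cons a rest)
  show ?case
  proof (cases rest)
    case Nil then show ?thesis using Cons.prems by simp
  next
    case (Cons b r)
    have E: "E a b" and s: "successively E rest" using Cons.prems \<open>rest = b # r\<close> by auto
    show ?thesis
    proof (cases "b \<in> X")
      case True then show ?thesis using E Cons.prems \<open>rest = b # r\<close> by auto
    next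
      case False
      have "last rest \<in> X" using Cons.prems \<open>rest = b # r\<close> by auto
      then obtain x y where "x \<notin> X \<and> y \<in> X \<and> E x y \<and> x \<in> set rest \<and> y \<in> set rest"
        using Cons.IH[OF s] False \<open>rest = b # r\<close> by auto
      then show ?thesis by auto
    qed
  qed
qed

lemma prefix_reach:
  assumes "gpath (V - P) E q" "hd q \<in> X - P" "z \<in> set q"
  shows "z \<in> reach V E X P"
proof -
  obtain ys zs where q: "q = ys @ z # zs" using split_list[OF assms(3)] by blast
  let ?q = "ys @ [z]"
  have "successively E ((ys @ [z]) @ zs)" using assms(1) q unfolding gpath_def by simp
  then have s: "successively E ?q" by (simp only: successively_append_iff)
  have g: "gpath (V - P) E ?q" using assms(1) s q unfolding gpath_def by auto
  have "hd ?q = hd q" using q by (cases ys) auto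
  then show ?thesis unfolding reach_def using g assms(2) by (intro CollectI exI[of _ ?q]) auto
qed

lemma nbr_reach:
  assumes "graph V E"
  shows "nbr V E (reach V E X P) \<subseteq> P"
proof
  fix y assume y: "y \<in> nbr V E (reach V E X P)"
  then obtain x where x: "x \<in> reach V E X P" and E: "E x y" and yV: "y \<in> V"
    and yn: "y \<notin> reach V E X P" unfolding nbr_def by auto
  obtain q where q: "gpath (V - P) E q" "hd q \<in> X - P" "last q = x"
    using x unfolding reach_def by auto
  show "y \<in> P"
  proof (rule ccontr)
    assume yP: "y \<notin> P"
    show False
    proof (cases "y \<in> set q")
      case True then show False using prefix_reach[OF q(1,2)] yn by auto
    next
      case False
      have "gpath (V - P) E (q @ [y])"
        using q(1) False yV yP E q(3) unfolding gpath_def by (auto simp: successively_append_iff)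
      moreover have "hd (q @ [y]) = hd q" using q(1) unfolding gpath_def by simp
      ultimately have "y \<in> reach V E X P" unfolding reach_def using q(2)
        by (intro CollectI exI[of _ "q @ [y]"]) auto
      then show False using yn by simp
    qed
  qed
qed

lemma nbr_lsep:
  assumes "graph V E" "S \<subseteq> X" "X \<inter> T = {}"
  shows "lsep V E S T (nbr V E X)"
  unfolding lsep_def separator_def
proof (intro conjI allI impI)
  show "nbr V E X \<subseteq> V" unfolding nbr_def by auto
  show "nbr V E X \<inter> S = {}" using assms(2) unfolding nbr_def by auto
  fix p assume p: "gpath V E p \<and> hd p \<in> S \<and> last p \<in> T"
  have "hd p \<notin> - X" "last p \<in> - X" using p assms by auto
  then obtain x y where "x \<notin> - X" "y \<in> - X" "E x y" "y \<in> set p"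
    using crossing[of E p "- X"] p unfolding gpath_def by blast
  moreover have "y \<in> V" using p \<open>y \<in> set p\<close> unfolding gpath_def by auto
  ultimately have "y \<in> nbr V E X" unfolding nbr_def by auto
  then show "set p \<inter> nbr V E X \<noteq> {}" using \<open>y \<in> set p\<close> by auto
qed

lemma nbr_card:
  assumes "finite V"
  shows "card (nbr V E (A \<union> B)) + card (nbr V E (A \<inter> B)) \<le> card (nbr V E A) + card (nbr V E B)"
proof -
  have fin: "finite (nbr V E Z)" for Z using assms unfolding nbr_def by auto
  have "card (nbr V E (A \<union> B)) + card (nbr V E (A \<inter> B))
      = card (nbr V E (A \<union> B) \<union> nbr V E (A \<inter> B)) + card (nbr V E (A \<union> B) \<inter> nbr V E (A \<inter> B))"
    using card_Un_Int fin by blast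
  also have "\<dots> \<le> card (nbr V E A \<union> nbr V E B) + card (nbr V E A \<inter> nbr V E B)"
  proof (rule add_mono; rule card_mono)
    show "finite (nbr V E A \<union> nbr V E B)" using fin by auto
    show "finite (nbr V E A \<inter> nbr V E B)" using fin by auto
    show "nbr V E (A \<union> B) \<union> nbr V E (A \<inter> B) \<subseteq> nbr V E A \<union> nbr V E B"
      unfolding nbr_def by auto
    show "nbr V E (A \<union> B) \<inter> nbr V E (A \<inter> B) \<subseteq> nbr V E A \<inter> nbr V E B"
      unfolding nbr_def by auto
  qed
  also have "\<dots> = card (nbr V E A) + card (nbr V E B)"
    using card_Un_Int fin by metis
  finally show ?thesis .
qed

lemma lam_le: "lsep V E S T P \<Longrightarrow> lambdaL V E S T \<le> enat (card P)"
  unfolding lambdaL_def by (rule INF_lower) auto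

lemma lam_ex:
  assumes "lambdaL V E S T \<noteq> \<infinity>"
  shows "\<exists>P. lsep V E S T P \<and> lambdaL V E S T = enat (card P)"
proof -
  let ?M = "(\<lambda>P. enat (card P)) ` {P. lsep V E S T P}"
  have "?M \<noteq> {}"
  proof
    assume "?M = {}"
    then have "lambdaL V E S T = Inf {}" unfolding lambdaL_def by simp
    then show False using assms by (simp add: Inf_enat_def)
  qed
  then have "Inf ?M \<in> ?M" unfolding Inf_enat_def by (auto intro: LeastI)
  then show ?thesis unfolding lambdaL_def by auto
qed

lemma lsep_mono: "lsep V E S T P \<Longrightarrow> S' \<subseteq> S \<Longrightarrow> T' \<subseteq> T \<Longrightarrow> lsep V E S' T' P"
  unfolding lsep_def separator_def by blast

lemma reach_sub: "reach V E X P \<subseteq> V - P"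
proof
  fix y assume "y \<in> reach V E X P"
  then obtain p where "gpath (V - P) E p" "last p = y" unfolding reach_def by auto
  then show "y \<in> V - P" unfolding gpath_def using last_in_set by blast
qed

lemma reach_base: "X \<subseteq> V \<Longrightarrow> X - P \<subseteq> reach V E X P"
proof
  fix x assume "X \<subseteq> V" "x \<in> X - P"
  then show "x \<in> reach V E X P" unfolding reach_def gpath_def
    by (intro CollectI exI[of _ "[x]"]) auto
qed

lemma reach_sep: "lsep V E X T P \<Longrightarrow> reach V E X P \<inter> T = {}"
proof (rule ccontr)
  assume l: "lsep V E X T P" and "reach V E X P \<inter> T \<noteq> {}"
  then obtain y q where "gpath (V - P) E q" "hd q \<in> X - P" "last q = y" "y \<in> T"
    unfolding reach_def by auto
  moreover have "gpath V E q" using gpath_mono[OF calculation(1)] by blast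
  ultimately show False using l unfolding lsep_def separator_def gpath_def by blast
qed

theorem lemma6:
  fixes V :: "'a set" and E :: "'a \<Rightarrow> 'a \<Rightarrow> bool" and S T Pm Pp :: "'a set" and v :: 'a
  assumes "graph V E"
    and "S \<subseteq> V" and "T \<subseteq> V" and "S \<inter> T = {}"
    and "min_lsep V E S T Pm" and "min_lsep V E S T Pp"
    and "\<And>P. min_lsep V E S T P \<Longrightarrow>
           reach V E S Pm \<subseteq> reach V E S P \<and> reach V E S P \<subseteq> reach V E S Pp"
    and "v \<in> V"
  shows "(lambdaL V E (S \<union> {v}) T > lambdaL V E S T \<longleftrightarrow> v \<in> reach V E T Pp \<union> Pp)
       \<and> (lambdaL V E S (T \<union> {v}) > lambdaL V E S T \<longleftrightarrow> v \<in> reach V E S Pm)"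
proof -
  have G: "finite V" "\<And>u w. E u w \<Longrightarrow> u \<in> V \<and> w \<in> V \<and> E w u"
    using assms(1) unfolding graph_def by auto
  define k where "k = card Pp"
  have lamk: "lambdaL V E S T = enat k" using assms(6) unfolding min_lsep_def k_def by simp
  have Ppl: "lsep V E S T Pp" using assms(6) unfolding min_lsep_def by simp
  have Pml: "lsep V E S T Pm" and cPm: "card Pm = k"
    using assms(5) lamk unfolding min_lsep_def by auto
  have ge: "\<And>P. lsep V E S T P \<Longrightarrow> k \<le> card P" using lam_le lamk by fastforce
  have fin: "\<And>P. P \<subseteq> V \<Longrightarrow> finite P" using G(1) finite_subset by blast
  have PpV: "Pp \<subseteq> V" using Ppl unfolding lsep_def separator_def by simp
  have part1: "lambdaL V E (S \<union> {v}) T > lambdaL V E S T \<longleftrightarrow> v \<in> reach V E T Pp \<union> Pp"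
  proof
    assume gt: "lambdaL V E (S \<union> {v}) T > lambdaL V E S T"
    show "v \<in> reach V E T Pp \<union> Pp"
    proof (rule ccontr)
      assume nv: "v \<notin> reach V E T Pp \<union> Pp"
      have "lsep V E (S \<union> {v}) T Pp"
        unfolding lsep_def separator_def
      proof (intro conjI allI impI)
        show "Pp \<subseteq> V" by (fact PpV)
        show "Pp \<inter> (S \<union> {v}) = {}" using Ppl nv unfolding lsep_def by auto
        fix p assume p: "gpath V E p \<and> hd p \<in> S \<union> {v} \<and> last p \<in> T"
        show "set p \<inter> Pp \<noteq> {}"
        proof (cases "hd p \<in> S")
          case True then show ?thesis using p Ppl unfolding lsep_def separator_def by blast
        next
          case False
          then have hv: "hd p = v" using p by auto
          show ?thesis
          proof
            assume d: "set p \<inter> Pp = {}"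
            have g: "gpath (V - Pp) E (rev p)" using p d G(2) unfolding gpath_def
              by (auto intro: successively_mono)
            have lp: "last p \<in> set p" using p unfolding gpath_def by simp
            have "last p \<notin> Pp" using lp d by blast
            then have h: "hd (rev p) \<in> T - Pp" using p by (simp add: hd_rev)
            have l: "last (rev p) = v" using hv p unfolding gpath_def by (simp add: last_rev)
            have "v \<in> reach V E T Pp" unfolding reach_def using g h l by blast
            then show False using nv by simp
          qed
        qed
      qed
      then have "lambdaL V E (S \<union> {v}) T \<le> lambdaL V E S T" using lam_le lamk k_def by metis
      then show False using gt by simp
    qed
  next
    assume vin: "v \<in> reach V E T Pp \<union> Pp"
    show "lambdaL V E (S \<union> {v}) T > lambdaL V E S T"
    proof (rule ccontr)
      assume "\<not> ?thesis"
      then have le: "lambdaL V E (S \<union> {v}) T \<le> enat k" using lamk by simp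
      then obtain P where Pl: "lsep V E (S \<union> {v}) T P" and Pc: "lambdaL V E (S \<union> {v}) T = enat (card P)"
        using lam_ex by (metis enat_ord_simps(5) enat.simps(3) infinity_ileE)
      have cP: "card P \<le> k" using le Pc by simp
      have PV: "P \<subseteq> V" using Pl unfolding lsep_def separator_def by simp
      have vP: "v \<notin> P" using Pl unfolding lsep_def by auto
      define A where "A = reach V E (S \<union> {v}) P"
      define B where "B = reach V E S Pp"
      have SV: "S \<union> {v} \<subseteq> V" using assms(2,8) by auto
      have SA: "S \<subseteq> A" and vA: "v \<in> A"
        using reach_base[OF SV, of P E] Pl vP unfolding A_def lsep_def by auto
      have SB: "S \<subseteq> B" using reach_base[OF assms(2), of Pp E] Ppl unfolding B_def lsep_def by auto
      have AT: "A \<inter> T = {}" using reach_sep[OF Pl] A_def by simp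
      have BT: "B \<inter> T = {}" using reach_sep[OF Ppl] B_def by simp
      have "nbr V E A \<subseteq> P" using nbr_reach[OF assms(1), of "S \<union> {v}" P] A_def by simp
      then have "card (nbr V E A) \<le> card P" by (rule card_mono[OF fin[OF PV]])
      then have NA: "card (nbr V E A) \<le> k" using cP by simp
      have NBsub: "nbr V E B \<subseteq> Pp" using nbr_reach[OF assms(1)] B_def by simp
      have NB: "card (nbr V E B) \<le> k" using card_mono[OF fin[OF PpV] NBsub] k_def by simp
      have lU: "lsep V E S T (nbr V E (A \<union> B))" by (rule nbr_lsep[OF assms(1)]) (use SA AT BT in auto)
      have lI: "lsep V E S T (nbr V E (A \<inter> B))" by (rule nbr_lsep[OF assms(1)]) (use SA SB AT in auto)
      have cU: "card (nbr V E (A \<union> B)) = k"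
        using nbr_card[OF G(1), of E A B] ge[OF lU] ge[OF lI] NA NB by linarith
      define Q where "Q = nbr V E (A \<union> B)"
      have Qm: "min_lsep V E S T Q" using lU cU lamk Q_def unfolding min_lsep_def by simp
      have QAB: "Q \<inter> (A \<union> B) = {}" unfolding Q_def nbr_def by auto
      have BQ: "B \<subseteq> reach V E S Q"
      proof
        fix y assume "y \<in> B"
        then obtain q where q: "gpath (V - Pp) E q" "hd q \<in> S - Pp" "last q = y"
          unfolding B_def reach_def by auto
        have "set q \<subseteq> B" using prefix_reach[OF q(1,2)] B_def by auto
        then have "gpath (V - Q) E q" using q(1) QAB unfolding gpath_def by auto
        moreover have "hd q \<in> S - Q" using q(2) SB QAB by auto
        ultimately show "y \<in> reach V E S Q" unfolding reach_def using q(3) by auto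
      qed
      have "reach V E S Q \<subseteq> B" using assms(7)[OF Qm] B_def by simp
      then have RQ: "reach V E S Q = B" using BQ by auto
      have "Pp = nbr V E B"
      proof -
        have "nbr V E B \<subseteq> Q" using nbr_reach[OF assms(1), of S Q] RQ by simp
        have "lsep V E S T (nbr V E B)" by (rule nbr_lsep[OF assms(1) SB BT])
        then have "k \<le> card (nbr V E B)" by (rule ge)
        moreover have "finite Pp" using fin PpV by simp
        ultimately show ?thesis using NBsub k_def by (metis card_seteq)
      qed
      also have "nbr V E B \<subseteq> Q" using nbr_reach[OF assms(1), of S Q] RQ by simp
      finally have PpQ: "Pp \<subseteq> Q" .
      have QV: "Q \<subseteq> V" unfolding Q_def nbr_def by auto
      have "Pp = Q" using card_seteq[OF fin[OF QV] PpQ] cU Q_def k_def by simp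
      then have QP: "Q = Pp" by simp
      have vAB: "v \<in> A \<union> B" using vA by simp
      show False
      proof (cases "v \<in> Pp")
        case True then show False using QAB QP vAB by auto
      next
        case False
        then have "v \<in> reach V E T Pp" using vin by simp
        then obtain q where q: "gpath (V - Pp) E q" "hd q \<in> T - Pp" "last q = v"
          unfolding reach_def by auto
        have "hd q \<notin> A \<union> B" using q(2) AT BT by auto
        moreover have "last q \<in> A \<union> B" using q(3) vAB by simp
        ultimately obtain x y where xy: "x \<notin> A \<union> B" "y \<in> A \<union> B" "E x y" "x \<in> set q"
          using crossing[of E q "A \<union> B"] q(1) unfolding gpath_def by blast
        have "x \<in> V" "E y x" using G(2)[OF xy(3)] by auto
        then have "x \<in> Q" unfolding Q_def nbr_def using xy by auto
        then show False using QP xy(4) q(1) unfolding gpath_def by auto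
      qed
    qed
  qed
  have part2: "lambdaL V E S (T \<union> {v}) > lambdaL V E S T \<longleftrightarrow> v \<in> reach V E S Pm"
  proof
    assume gt: "lambdaL V E S (T \<union> {v}) > lambdaL V E S T"
    show "v \<in> reach V E S Pm"
    proof (rule ccontr)
      assume nv: "v \<notin> reach V E S Pm"
      have "lsep V E S (T \<union> {v}) Pm"
        unfolding lsep_def separator_def
      proof (intro conjI allI impI)
        show "Pm \<subseteq> V" "Pm \<inter> S = {}" using Pml unfolding lsep_def separator_def by auto
        fix p assume p: "gpath V E p \<and> hd p \<in> S \<and> last p \<in> T \<union> {v}"
        show "set p \<inter> Pm \<noteq> {}"
        proof (cases "last p \<in> T")
          case True then show ?thesis using p Pml unfolding lsep_def separator_def by blast
        next
          case False
          then have hv: "last p = v" using p by auto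
          show ?thesis
          proof
            assume d: "set p \<inter> Pm = {}"
            have "gpath (V - Pm) E p" using p d unfolding gpath_def by auto
            moreover have "hd p \<in> set p" using p unfolding gpath_def by simp
            then have "hd p \<in> S - Pm" using p d by blast
            ultimately have "v \<in> reach V E S Pm" unfolding reach_def using hv by blast
            then show False using nv by simp
          qed
        qed
      qed
      then have "lambdaL V E S (T \<union> {v}) \<le> lambdaL V E S T" using lam_le lamk cPm by metis
      then show False using gt by simp
    qed
  next
    assume vin: "v \<in> reach V E S Pm"
    show "lambdaL V E S (T \<union> {v}) > lambdaL V E S T"
    proof (rule ccontr)
      assume "\<not> ?thesis"
      then have le: "lambdaL V E S (T \<union> {v}) \<le> enat k" using lamk by simp
      then obtain P where Pl: "lsep V E S (T \<union> {v}) P" and Pc: "lambdaL V E S (T \<union> {v}) = enat (card P)"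
        using lam_ex by (metis enat_ord_simps(5) enat.simps(3) infinity_ileE)
      have Pl': "lsep V E S T P" using lsep_mono[OF Pl] by auto
      have "card P = k" using le Pc ge[OF Pl'] by simp
      then have Pm': "min_lsep V E S T P" using Pl' lamk unfolding min_lsep_def by simp
      have "v \<in> reach V E S P" using assms(7)[OF Pm'] vin by auto
      moreover have "reach V E S P \<inter> (T \<union> {v}) = {}" by (rule reach_sep[OF Pl])
      ultimately show False by auto
    qed
  qed
  show ?thesis using part1 part2 by simp
qed

end
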